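(* Let $\Gamma=(V,E,w)$ be a finite simple weighted digraph with vertex set $V=\{1,\dots,n\}$ and non-negative weights (with $w_{ij}=0$ iff $(i,j)\notin E$), and let $L=D-A$ be its graph Laplacian. Then $\sigma(L)=\{d^{+}(1),\dots,d^{+}(n)\}$ (as multisets) if and only if $\Gamma$ is acyclic.
   Context: $d^{+}(i)=\sum_{j\in V} w_{ij}$ is the out-degree of vertex $i$, $D=\mathrm{diag}(d^{+}(1),\dots,d^{+}(n))$, $A=[w_{ij}]$, and $L=D-A$. $\sigma(L)$ denotes the multiset of eigenvalues of $L$ counted with algebraic multiplicity. A digraph is acyclic if it contains no directed cycle. *)

theory Defs
  imports "Jordan_Normal_Form.Char_Poly" "HOL-Computational_Algebra.Fundamental_Theorem_Algebra"
begin

text \<open>Weighted digraph on vertex set {0..<n} (the paper's {1..n}, shifted by one),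
  given by a weight function w; (i,j) is an edge iff w i j \<noteq> 0.\<close>

definition out_degree :: "nat \<Rightarrow> (nat \<Rightarrow> nat \<Rightarrow> real) \<Rightarrow> nat \<Rightarrow> real" where
  "out_degree n w i = (\<Sum>j<n. w i j)"

definition digraph_edges :: "nat \<Rightarrow> (nat \<Rightarrow> nat \<Rightarrow> real) \<Rightarrow> (nat \<times> nat) set" where
  "digraph_edges n w = {(i, j). i < n \<and> j < n \<and> w i j \<noteq> 0}"

definition laplacian :: "nat \<Rightarrow> (nat \<Rightarrow> nat \<Rightarrow> real) \<Rightarrow> real mat" where
  "laplacian n w = mat n n (\<lambda>(i, j). (if i = j then out_degree n w i else 0) - w i j)"

definition spectrum_mset :: "real mat \<Rightarrow> complex multiset" where
  "spectrum_mset A = proots (char_poly (map_mat complex_of_real A))"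

end

theory Submission
  imports Defs "HOL-Combinatorics.Cycles" "Jordan_Normal_Form.Schur_Decomposition"
    "Jordan_Normal_Form.Jordan_Normal_Form_Uniqueness"
begin


lemma mult_entry:
  assumes "A \<in> carrier_mat n n" "B \<in> carrier_mat n n" "i < n" "j < n"
  shows "(A * B) $$ (i, j) = (\<Sum>r<n. A $$ (i, r) * B $$ (r, j))"
  using assms by (simp add: scalar_prod_def lessThan_atLeast0)

lemma single_sum:
  fixes f :: "nat \<Rightarrow> 'a::comm_monoid_add"
  assumes "i < n" "\<And>r. r < n \<Longrightarrow> r \<noteq> i \<Longrightarrow> f r = 0"
  shows "(\<Sum>r<n. f r) = f i"
proof -
  have "(\<Sum>r<n. f r) = f i + (\<Sum>r\<in>{..<n} - {i}. f r)"
    using assms(1) by (simp add: sum.remove)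
  also have "(\<Sum>r\<in>{..<n} - {i}. f r) = 0" using assms(2) by (intro sum.neutral) auto
  finally show ?thesis by simp
qed

lemma ut_mult:
  fixes A B :: "'a::comm_ring_1 mat"
  assumes A: "A \<in> carrier_mat n n" and B: "B \<in> carrier_mat n n"
    and uA: "upper_triangular A" and uB: "upper_triangular B"
  shows "upper_triangular (A * B)" "\<And>i. i < n \<Longrightarrow> (A * B) $$ (i, i) = A $$ (i, i) * B $$ (i, i)"
proof -
  show "upper_triangular (A * B)"
  proof (rule upper_triangularI)
    fix i j assume ji: "j < i" and i: "i < dim_row (A * B)"
    hence i': "i < n" using A by simp
    have "(A * B) $$ (i, j) = (\<Sum>r<n. A $$ (i, r) * B $$ (r, j))"
      using mult_entry[OF A B i'] ji i' by simp
    also have "\<dots> = 0"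
    proof (intro sum.neutral ballI)
      fix r assume r: "r \<in> {..<n}"
      show "A $$ (i, r) * B $$ (r, j) = 0"
      proof (cases "r < i")
        case True thus ?thesis using uA A i' by (auto simp: upper_triangular_def)
      next
        case False thus ?thesis using uB B r ji by (auto simp: upper_triangular_def)
      qed
    qed
    finally show "(A * B) $$ (i, j) = 0" .
  qed
  fix i assume i: "i < n"
  have "(A * B) $$ (i, i) = (\<Sum>r<n. A $$ (i, r) * B $$ (r, i))"
    using mult_entry[OF A B i i] .
  also have "\<dots> = A $$ (i, i) * B $$ (i, i)"
  proof (rule single_sum[OF i])
    fix r assume r: "r < n" "r \<noteq> i"
    show "A $$ (i, r) * B $$ (r, i) = 0"
    proof (cases "r < i")
      case True thus ?thesis using uA A i by (auto simp: upper_triangular_def)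
    next
      case False thus ?thesis using uB B r by (auto simp: upper_triangular_def)
    qed
  qed
  finally show "(A * B) $$ (i, i) = A $$ (i, i) * B $$ (i, i)" .
qed

lemma ut_pow:
  fixes U :: "'a::comm_ring_1 mat"
  assumes U: "U \<in> carrier_mat n n" and uU: "upper_triangular U"
  shows "upper_triangular (U ^\<^sub>m k) \<and> (\<forall>i<n. (U ^\<^sub>m k) $$ (i, i) = U $$ (i, i) ^ k)"
proof (induction k)
  case 0 thus ?case using U by auto
next
  case (Suc k)
  have P: "U ^\<^sub>m k \<in> carrier_mat n n" using U by simp
  show ?case using ut_mult[OF P U _ uU] Suc by simp
qed

lemma trace_comm:
  fixes A B :: "'a::comm_ring_1 mat"
  assumes A: "A \<in> carrier_mat n n" and B: "B \<in> carrier_mat n n"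
  shows "(\<Sum>i<n. (A * B) $$ (i, i)) = (\<Sum>i<n. (B * A) $$ (i, i))"
proof -
  have "(\<Sum>i<n. (A * B) $$ (i, i)) = (\<Sum>i<n. \<Sum>r<n. A $$ (i, r) * B $$ (r, i))"
    using mult_entry[OF A B] by simp
  also have "\<dots> = (\<Sum>r<n. \<Sum>i<n. B $$ (r, i) * A $$ (i, r))"
    by (subst sum.swap) (simp add: mult.commute)
  also have "\<dots> = (\<Sum>i<n. (B * A) $$ (i, i))"
    using mult_entry[OF B A] by simp
  finally show ?thesis .
qed

lemma trace_sim:
  fixes P X Q :: "'a::comm_ring_1 mat"
  assumes P: "P \<in> carrier_mat n n" and X: "X \<in> carrier_mat n n" and Q: "Q \<in> carrier_mat n n"
    and QP: "Q * P = 1\<^sub>m n"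
  shows "(\<Sum>i<n. (P * X * Q) $$ (i, i)) = (\<Sum>i<n. X $$ (i, i))"
proof -
  have "(\<Sum>i<n. (P * X * Q) $$ (i, i)) = (\<Sum>i<n. (Q * (P * X)) $$ (i, i))"
    by (rule trace_comm) (use P X Q in auto)
  also have "Q * (P * X) = (Q * P) * X" using P X Q by (simp add: assoc_mult_mat)
  also have "\<dots> = X" using QP X by simp
  finally show ?thesis .
qed



lemma nonneg_pow:
  fixes M :: "real mat"
  assumes M: "M \<in> carrier_mat n n" and nn: "\<And>i j. i < n \<Longrightarrow> j < n \<Longrightarrow> M $$ (i, j) \<ge> 0"
  shows "i < n \<Longrightarrow> j < n \<Longrightarrow> (M ^\<^sub>m k) $$ (i, j) \<ge> 0"
proof (induction k arbitrary: i j)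
  case 0 thus ?case using M by simp
next
  case (Suc k)
  have P: "M ^\<^sub>m k \<in> carrier_mat n n" using M by simp
  have "(M ^\<^sub>m Suc k) $$ (i, j) = (\<Sum>r<n. (M ^\<^sub>m k) $$ (i, r) * M $$ (r, j))"
    using mult_entry[OF P M Suc.prems] by simp
  moreover have "0 \<le> (\<Sum>r<n. (M ^\<^sub>m k) $$ (i, r) * M $$ (r, j))"
    by (intro sum_nonneg mult_nonneg_nonneg) (use Suc nn in auto)
  ultimately show ?case by simp
qed

lemma walk_pos:
  fixes M :: "real mat"
  assumes M: "M \<in> carrier_mat n n" and nn: "\<And>i j. i < n \<Longrightarrow> j < n \<Longrightarrow> M $$ (i, j) \<ge> 0"
    and "(i, j) \<in> R\<^sup>+"
    and R: "\<And>a b. (a, b) \<in> R \<Longrightarrow> a < n \<and> b < n \<and> M $$ (a, b) > 0"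
  shows "\<exists>k. (M ^\<^sub>m Suc k) $$ (i, j) > 0"
  using assms(3)
proof (induction rule: trancl_induct)
  case (base y)
  then show ?case using R[OF base] M by (intro exI[of _ 0]) simp
next
  case (step y z)
  from step.IH obtain k where k: "(M ^\<^sub>m Suc k) $$ (i, y) > 0" by blast
  have yz: "y < n" "z < n" "M $$ (y, z) > 0" using R[OF step.hyps(2)] by auto
  have iy: "(i, y) \<in> R\<^sup>+" by fact
  have i: "i < n" using iy R by (induction rule: trancl_induct) auto
  have P: "M ^\<^sub>m Suc k \<in> carrier_mat n n" by (rule pow_carrier_mat[OF M])
  have "(M ^\<^sub>m Suc (Suc k)) $$ (i, z) = (\<Sum>r<n. (M ^\<^sub>m Suc k) $$ (i, r) * M $$ (r, z))"
    using mult_entry[OF P M i yz(2)] by simp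
  also have "\<dots> \<ge> (M ^\<^sub>m Suc k) $$ (i, y) * M $$ (y, z)"
  proof (rule member_le_sum)
    fix r assume r: "r \<in> {..<n} - {y}"
    have nP: "0 \<le> (M ^\<^sub>m Suc k) $$ (i, r)" using nonneg_pow[OF M nn] i r by blast
    have nM: "0 \<le> M $$ (r, z)" using nn r yz by blast
    show "0 \<le> (M ^\<^sub>m Suc k) $$ (i, r) * M $$ (r, z)" using nP nM by (rule mult_nonneg_nonneg)
  qed (use yz in auto)
  finally have "(M ^\<^sub>m Suc (Suc k)) $$ (i, z) > 0" using k yz
    by (smt (verit) mult_pos_pos)
  thus ?case by blast
qed

lemma sum_expand:
  fixes x y u v :: "nat \<Rightarrow> real"
  shows "(\<Sum>r<n. (x r + y r) * (u r + v r)) = (\<Sum>r<n. x r * u r) + (\<Sum>r<n. y r * v r) + (\<Sum>r<n. x r * v r + y r * u r)"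
  unfolding sum.distrib[symmetric] by (rule sum.cong) (simp_all add: algebra_simps)

lemma split_bound:
  fixes n :: nat and a :: "nat \<Rightarrow> nat \<Rightarrow> real"
  fixes ed :: "nat \<Rightarrow> real"
  defines "M \<equiv> mat n n (\<lambda>(i, j). (if i = j then ed i else 0) + a i j)"
  defines "Aa \<equiv> mat n n (\<lambda>(i, j). a i j)"
  assumes e0: "\<And>i. i < n \<Longrightarrow> ed i \<ge> 0" and a0: "\<And>i j. i < n \<Longrightarrow> j < n \<Longrightarrow> a i j \<ge> 0"
  shows "i < n \<Longrightarrow> j < n \<Longrightarrow>
    (M ^\<^sub>m Suc k) $$ (i, j) \<ge> (if i = j then ed i ^ Suc k else 0) + (Aa ^\<^sub>m Suc k) $$ (i, j)"
proof (induction k arbitrary: i j)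
  case 0 thus ?case unfolding M_def Aa_def by simp
next
  case (Suc k)
  have Mc: "M \<in> carrier_mat n n" and Ac: "Aa \<in> carrier_mat n n" unfolding M_def Aa_def by auto
  have Mnn: "\<And>i j. i < n \<Longrightarrow> j < n \<Longrightarrow> M $$ (i, j) \<ge> 0" unfolding M_def using e0 a0 by simp
  have Ann: "\<And>i j. i < n \<Longrightarrow> j < n \<Longrightarrow> Aa $$ (i, j) \<ge> 0" unfolding Aa_def using a0 by simp
  have P: "M ^\<^sub>m Suc k \<in> carrier_mat n n" by (rule pow_carrier_mat[OF Mc])
  have PA: "Aa ^\<^sub>m Suc k \<in> carrier_mat n n" by (rule pow_carrier_mat[OF Ac])
  have c1: "(M ^\<^sub>m Suc (Suc k)) $$ (i, j) = (\<Sum>r<n. (M ^\<^sub>m Suc k) $$ (i, r) * M $$ (r, j))"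
    using mult_entry[OF P Mc Suc.prems] by simp
  have c2: "(\<Sum>r<n. (M ^\<^sub>m Suc k) $$ (i, r) * M $$ (r, j)) \<ge> (\<Sum>r<n. ((if i = r then ed i ^ Suc k else 0) + (Aa ^\<^sub>m Suc k) $$ (i, r)) *
       ((if r = j then ed r else 0) + a r j))"
  proof (rule sum_mono)
    fix r assume r: "r \<in> {..<n}"
    have eq: "M $$ (r, j) = (if r = j then ed r else 0) + a r j" unfolding M_def using r Suc.prems by simp
    have ge: "(if r = j then ed r else 0) + a r j \<ge> 0" using Mnn[of r j] r Suc.prems eq by simp
    have h1: "(if i = r then ed i ^ Suc k else 0) + (Aa ^\<^sub>m Suc k) $$ (i, r) \<le> (M ^\<^sub>m Suc k) $$ (i, r)"
      using Suc.IH[of i r] Suc.prems r by blast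
    show "((if i = r then ed i ^ Suc k else 0) + (Aa ^\<^sub>m Suc k) $$ (i, r)) *
       ((if r = j then ed r else 0) + a r j) \<le> (M ^\<^sub>m Suc k) $$ (i, r) * M $$ (r, j)"
      unfolding eq by (rule mult_right_mono[OF h1 ge])
  qed
  have c3: "(\<Sum>r<n. ((if i = r then ed i ^ Suc k else 0) + (Aa ^\<^sub>m Suc k) $$ (i, r)) *
       ((if r = j then ed r else 0) + a r j)) \<ge>
     (\<Sum>r<n. (if i = r then ed i ^ Suc k else 0) * (if r = j then ed r else 0)) +
     (\<Sum>r<n. (Aa ^\<^sub>m Suc k) $$ (i, r) * a r j)"
  proof -
    have "(\<Sum>r<n. ((if i = r then ed i ^ Suc k else 0) + (Aa ^\<^sub>m Suc k) $$ (i, r)) *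
       ((if r = j then ed r else 0) + a r j)) =
      (\<Sum>r<n. (if i = r then ed i ^ Suc k else 0) * (if r = j then ed r else 0)) +
      (\<Sum>r<n. (Aa ^\<^sub>m Suc k) $$ (i, r) * a r j) +
      (\<Sum>r<n. (if i = r then ed i ^ Suc k else 0) * a r j + (Aa ^\<^sub>m Suc k) $$ (i, r) * (if r = j then ed r else 0))"
      by (rule sum_expand[of "\<lambda>r. if i = r then ed i ^ Suc k else 0" "\<lambda>r. (Aa ^\<^sub>m Suc k) $$ (i, r)"
           "\<lambda>r. if r = j then ed r else 0" "\<lambda>r. a r j"])
    moreover have "(\<Sum>r<n. (if i = r then ed i ^ Suc k else 0) * a r j + (Aa ^\<^sub>m Suc k) $$ (i, r) * (if r = j then ed r else 0)) \<ge> 0"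
    proof (intro sum_nonneg)
      fix r assume r: "r \<in> {..<n}"
      have "0 \<le> (Aa ^\<^sub>m Suc k) $$ (i, r)" using nonneg_pow[OF Ac Ann, of i r "Suc k"] r Suc.prems by simp
      thus "0 \<le> (if i = r then ed i ^ Suc k else 0) * a r j + (Aa ^\<^sub>m Suc k) $$ (i, r) * (if r = j then ed r else 0)"
        using e0 a0 r Suc.prems by (intro add_nonneg_nonneg mult_nonneg_nonneg) auto
    qed
    ultimately show ?thesis by linarith
  qed
  have c4: "(\<Sum>r<n. (if i = r then ed i ^ Suc k else 0) * (if r = j then ed r else 0)) =
     (if i = j then ed i ^ Suc (Suc k) else 0)"
    using Suc.prems by (subst single_sum[of i]) auto
  have c5: "(\<Sum>r<n. (Aa ^\<^sub>m Suc k) $$ (i, r) * a r j) = (Aa ^\<^sub>m Suc (Suc k)) $$ (i, j)"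
    using mult_entry[OF PA Ac Suc.prems] Suc.prems by (simp add: Aa_def)
  show ?case using c1 c2 c3 c4 c5 by linarith
qed



lemma perm_cycle:
  assumes p: "p permutes {0..<n}" and pid: "p \<noteq> id"
    and edges: "\<forall>i<n. p i \<noteq> i \<longrightarrow> w i (p i) \<noteq> 0"
  shows "\<not> acyclic (digraph_edges n w)"
proof
  assume ac: "acyclic (digraph_edges n w)"
  from pid obtain i where pi: "p i \<noteq> i" using eq_id_iff by metis
  have i: "i < n" using p pi unfolding permutes_def by auto
  have injp: "inj p" using p by (rule permutes_inj)
  have inS: "(p ^^ k) i < n" for k
  proof (induction k)
    case 0 thus ?case using i by simp
  next
    case (Suc k) thus ?case using permutes_in_image[OF p, of "(p ^^ k) i"] by simp
  qed
  have mv: "p ((p ^^ k) i) \<noteq> (p ^^ k) i" for k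
  proof
    assume eq: "p ((p ^^ k) i) = (p ^^ k) i"
    have "(p ^^ k) (p i) = (p ^^ k) i" using eq by (simp add: funpow_swap1)
    hence "p i = i" using inj_fn[OF injp, of k] by (simp add: inj_eq)
    thus False using pi by simp
  qed
  have E: "((p ^^ k) i, (p ^^ Suc k) i) \<in> digraph_edges n w" for k
    using inS[of k] inS[of "Suc k"] mv[of k] edges unfolding digraph_edges_def by auto
  have T: "(i, (p ^^ Suc k) i) \<in> (digraph_edges n w)\<^sup>+" for k
  proof (induction k)
    case 0 thus ?case using E[of 0] by auto
  next
    case (Suc k) thus ?case using E[of "Suc k"] by (meson trancl_into_trancl)
  qed
  have "permutation p" unfolding permutation_permutes using p by blast
  then obtain N where N: "(p ^^ N) = id" "N > 0" by (rule permutation_is_nilpotent)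
  then obtain M where "N = Suc M" by (cases N) auto
  hence "(p ^^ Suc M) i = i" using N by simp
  with T[of M] have "(i, i) \<in> (digraph_edges n w)\<^sup>+" by simp
  with ac show False unfolding acyclic_def by blast
qed

lemma sum_single_mset: "(\<Sum>i<n. {#f i#}) = mset (map f [0..<n])"
  by (induction n) auto

lemma proots_linear_prod: "proots (\<Prod>a\<leftarrow>as. [:- a, 1:]) = mset (as :: complex list)"
proof (induction as)
  case Nil thus ?case by simp
next
  case (Cons a as)
  have nz: "(\<Prod>a\<leftarrow>as. [:- a, 1:]) \<noteq> (0 :: complex poly)"
  proof -
    have "0 \<notin> set (map (\<lambda>a. [:- a, 1:]) as)" by auto
    thus ?thesis by (simp only: prod_list_zero_iff) simp
  qed
  have "proots (\<Prod>a\<leftarrow>a # as. [:- a, 1:]) = proots ([:- a, 1:] * (\<Prod>a\<leftarrow>as. [:- a, 1:]))"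
    by (simp only: list.map prod_list.Cons)
  also have "\<dots> = proots [:- a, 1:] + proots (\<Prod>a\<leftarrow>as. [:- a, 1:])"
    by (rule proots_mult) (use nz in auto)
  also have "\<dots> = {#a#} + mset as" using Cons proots_linear_factor[of "- a"] by simp
  finally show ?case by simp
qed



lemma dir1:
  fixes n :: nat and w :: "nat \<Rightarrow> nat \<Rightarrow> real"
  assumes no_loops: "\<And>i. i < n \<Longrightarrow> w i i = 0"
    and ac: "acyclic (digraph_edges n w)"
  shows "spectrum_mset (laplacian n w) = mset (map (\<lambda>i. complex_of_real (out_degree n w i)) [0..<n])"
proof -
  define d where "d i = complex_of_real (out_degree n w i)" for i
  define Lc where "Lc = map_mat complex_of_real (laplacian n w)"
  have Lc: "Lc \<in> carrier_mat n n" unfolding Lc_def laplacian_def by simp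
  define CM where "CM = char_poly_matrix Lc"
  have CM: "CM \<in> carrier_mat n n" unfolding CM_def using Lc by simp
  have CMe: "CM $$ (i, j) = (if i = j then [:- d i, 1:] else [: complex_of_real (w i j) :])"
    if "i < n" "j < n" for i j
    using that Lc no_loops unfolding CM_def char_poly_matrix_def Lc_def laplacian_def d_def
    by auto
  have "char_poly Lc = det CM" unfolding CM_def char_poly_def ..
  also have "\<dots> = (\<Sum>p | p permutes {0..<n}. signof p * (\<Prod>i = 0..<n. CM $$ (i, p i)))"
    by (rule det_def'[OF CM])
  also have "\<dots> = signof id * (\<Prod>i = 0..<n. CM $$ (i, id i))"
  proof -
    have fin: "finite {p. p permutes {0..<n}}" by (simp add: finite_permutations)
    have idin: "id \<in> {p. p permutes {0..<n}}" by (simp add: permutes_id)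
    have z: "(\<Sum>p \<in> {p. p permutes {0..<n}} - {id}. signof p * (\<Prod>i = 0..<n. CM $$ (i, p i))) = 0"
    proof (rule sum.neutral, rule ballI)
      fix p assume p: "p \<in> {p. p permutes {0..<n}} - {id}"
      hence pp: "p permutes {0..<n}" "p \<noteq> id" by auto
      have "\<not> (\<forall>i<n. p i \<noteq> i \<longrightarrow> w i (p i) \<noteq> 0)" using perm_cycle[OF pp] ac by blast
      then obtain i where i: "i < n" "p i \<noteq> i" "w i (p i) = 0" by blast
      have "p i < n" using permutes_in_image[OF pp(1)] i by simp
      hence "CM $$ (i, p i) = 0" using CMe[OF i(1)] i by simp
      hence "(\<Prod>i = 0..<n. CM $$ (i, p i)) = 0" using i by (intro prod_zero) auto
      thus "signof p * (\<Prod>i = 0..<n. CM $$ (i, p i)) = 0" by simp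
    qed
    show ?thesis using sum.remove[OF fin idin, of "\<lambda>p. signof p * (\<Prod>i = 0..<n. CM $$ (i, p i))"] z
      by simp
  qed
  also have "\<dots> = (\<Prod>i<n. [:- d i, 1:])"
    using CMe by (simp add: atLeast0LessThan)
  finally have cp: "char_poly Lc = (\<Prod>i<n. [:- d i, 1:])" .
  have "proots (char_poly Lc) = (\<Sum>i<n. proots [:- d i, 1:])"
    unfolding cp by (rule proots_prod) auto
  also have "\<dots> = (\<Sum>i<n. {#d i#})" using proots_linear_factor by simp
  also have "\<dots> = mset (map d [0..<n])" by (rule sum_single_mset)
  finally show ?thesis unfolding spectrum_mset_def Lc_def d_def by simp
qed



lemma dir2:
  fixes n :: nat and w :: "nat \<Rightarrow> nat \<Rightarrow> real"
  assumes nonneg: "\<And>i j. i < n \<Longrightarrow> j < n \<Longrightarrow> w i j \<ge> 0"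
    and spec: "spectrum_mset (laplacian n w) = mset (map (\<lambda>i. complex_of_real (out_degree n w i)) [0..<n])"
  shows "acyclic (digraph_edges n w)"
proof (rule ccontr)
  assume "\<not> acyclic (digraph_edges n w)"
  then obtain i0 where i0: "(i0, i0) \<in> (digraph_edges n w)\<^sup>+" unfolding acyclic_def by blast
  define d where "d i = out_degree n w i" for i
  define t where "t = (\<Sum>i<n. d i)"
  define ed where "ed i = t - d i" for i
  have d0: "d i \<ge> 0" if "i < n" for i
    unfolding d_def out_degree_def using nonneg that by (intro sum_nonneg) auto
  have ed0: "ed i \<ge> 0" if "i < n" for i
  proof -
    have "d i \<le> t" unfolding t_def using d0 that by (intro member_le_sum) auto
    thus ?thesis unfolding ed_def by simp
  qed
  define B where "B = mat n n (\<lambda>(i, j). (if i = j then ed i else 0) + w i j)"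
  define Aa where "Aa = mat n n (\<lambda>(i, j). w i j)"
  have Ac: "Aa \<in> carrier_mat n n" unfolding Aa_def by simp
  have Bc: "B \<in> carrier_mat n n" unfolding B_def by simp
  have i0n: "i0 < n" using i0 by (induction rule: trancl_induct) (auto simp: digraph_edges_def)
  obtain k where k: "(Aa ^\<^sub>m Suc k) $$ (i0, i0) > 0"
  proof -
    have "\<exists>k. (Aa ^\<^sub>m Suc k) $$ (i0, i0) > 0"
    proof (rule walk_pos[OF Ac _ i0])
      show "\<And>i j. i < n \<Longrightarrow> j < n \<Longrightarrow> Aa $$ (i, j) \<ge> 0" unfolding Aa_def using nonneg by simp
      fix a b assume "(a, b) \<in> digraph_edges n w"
      thus "a < n \<and> b < n \<and> Aa $$ (a, b) > 0"
        unfolding digraph_edges_def Aa_def using nonneg[of a b] by auto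
    qed
    thus ?thesis using that by blast
  qed
  define m where "m = Suc k"
  have bound: "(B ^\<^sub>m m) $$ (i, i) \<ge> ed i ^ m + (Aa ^\<^sub>m m) $$ (i, i)" if "i < n" for i
    using split_bound[of n ed w i i k] ed0 nonneg that unfolding B_def Aa_def m_def by simp
  have Ann: "(Aa ^\<^sub>m m) $$ (i, i) \<ge> 0" if "i < n" for i
    by (rule nonneg_pow[OF Ac _ that that]) (use nonneg in \<open>auto simp: Aa_def\<close>)
  have strict: "(\<Sum>i<n. ed i ^ m) < (\<Sum>i<n. (B ^\<^sub>m m) $$ (i, i))"
  proof (rule sum_strict_mono_ex1)
    show "\<forall>x\<in>{..<n}. ed x ^ m \<le> (B ^\<^sub>m m) $$ (x, x)" using bound Ann by force
    show "\<exists>a\<in>{..<n}. ed a ^ m < (B ^\<^sub>m m) $$ (a, a)"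
      using bound[OF i0n] k i0n unfolding m_def by force
  qed auto
  define Lc where "Lc = map_mat complex_of_real (laplacian n w)"
  have Lc: "Lc \<in> carrier_mat n n" unfolding Lc_def laplacian_def by simp
  obtain as where cpf: "char_poly Lc = (\<Prod>a\<leftarrow>as. [:- a, 1:])" and las: "length as = n"
    using char_poly_factorized[OF Lc] by blast
  obtain T P Q where sd: "schur_decomposition Lc as = (T, P, Q)" by (cases "schur_decomposition Lc as") auto
  from schur_decomposition[OF Lc cpf sd]
  have sim: "similar_mat_wit Lc T P Q" and uT: "upper_triangular T" and dT: "diag_mat T = as" by auto
  note simD = similar_mat_witD2[OF Lc sim]
  define U where "U = (-1) \<cdot>\<^sub>m char_matrix T (complex_of_real t)"
  define Bcx where "Bcx = (-1) \<cdot>\<^sub>m char_matrix Lc (complex_of_real t)"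
  have sim2: "similar_mat_wit Bcx U P Q"
    unfolding U_def Bcx_def by (rule similar_mat_wit_smult[OF similar_mat_wit_char_matrix[OF sim]])
  have Uc: "U \<in> carrier_mat n n" unfolding U_def using simD by simp
  have Tc: "T \<in> carrier_mat n n" using simD by simp
  have uU: "upper_triangular U"
  proof (rule upper_triangularI)
    fix i j assume "j < i" "i < dim_row U"
    thus "U $$ (i, j) = 0" using uT Tc unfolding U_def char_matrix_def upper_triangular_def by auto
  qed
  have Udiag: "U $$ (i, i) = complex_of_real t - as ! i" if "i < n" for i
  proof -
    have "as ! i = T $$ (i, i)" using dT[symmetric] that Tc by (simp add: diag_mat_def)
    thus ?thesis using that Tc unfolding U_def char_matrix_def by simp
  qed
  have BcxB: "Bcx = map_mat complex_of_real B"
    by (rule eq_matI) (use Lc in \<open>auto simp: Bcx_def B_def Lc_def laplacian_def char_matrix_def ed_def d_def\<close>)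
  have "map_mat complex_of_real (B ^\<^sub>m m) = Bcx ^\<^sub>m m"
    unfolding BcxB by (rule of_real_hom.mat_hom_pow[OF Bc])
  also have "\<dots> = P * U ^\<^sub>m m * Q" by (rule similar_mat_wit_pow_id[OF sim2])
  finally have powe: "map_mat complex_of_real (B ^\<^sub>m m) = P * U ^\<^sub>m m * Q" .
  have "complex_of_real (\<Sum>i<n. (B ^\<^sub>m m) $$ (i, i)) = (\<Sum>i<n. (map_mat complex_of_real (B ^\<^sub>m m)) $$ (i, i))"
    using Bc by simp
  also have "\<dots> = (\<Sum>i<n. (P * U ^\<^sub>m m * Q) $$ (i, i))" unfolding powe ..
  also have "\<dots> = (\<Sum>i<n. (U ^\<^sub>m m) $$ (i, i))"
    by (rule trace_sim) (use simD Uc in auto)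
  also have "\<dots> = (\<Sum>i<n. (complex_of_real t - as ! i) ^ m)"
    using ut_pow[OF Uc uU, of m] Udiag by simp
  also have "\<dots> = sum_list (map (\<lambda>a. (complex_of_real t - a) ^ m) as)"
    using las by (simp add: sum_list_sum_nth atLeast0LessThan)
  also have "\<dots> = sum_mset (image_mset (\<lambda>a. (complex_of_real t - a) ^ m) (mset as))"
    unfolding mset_map[symmetric] sum_mset_sum_list ..
  also have "mset as = mset (map (\<lambda>i. complex_of_real (d i)) [0..<n])"
    using spec proots_linear_prod[of as] cpf unfolding spectrum_mset_def Lc_def d_def by simp
  also have "sum_mset (image_mset (\<lambda>a. (complex_of_real t - a) ^ m) (mset (map (\<lambda>i. complex_of_real (d i)) [0..<n])))
     = (\<Sum>i<n. complex_of_real (ed i ^ m))"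
    unfolding mset_map[symmetric] sum_mset_sum_list
    by (simp add: sum_list_sum_nth atLeast0LessThan ed_def)
  also have "\<dots> = complex_of_real (\<Sum>i<n. ed i ^ m)" by simp
  finally have "(\<Sum>i<n. (B ^\<^sub>m m) $$ (i, i)) = (\<Sum>i<n. ed i ^ m)" using of_real_eq_iff by blast
  with strict show False by simp
qed


theorem theorem2p6:
  fixes n :: nat and w :: "nat \<Rightarrow> nat \<Rightarrow> real"
  assumes nonneg: "\<And>i j. i < n \<Longrightarrow> j < n \<Longrightarrow> w i j \<ge> 0"
    and no_loops: "\<And>i. i < n \<Longrightarrow> w i i = 0"
  shows "spectrum_mset (laplacian n w)
           = mset (map (\<lambda>i. complex_of_real (out_degree n w i)) [0..<n])
         \<longleftrightarrow> acyclic (digraph_edges n w)"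
  using dir1[of n w, OF no_loops] dir2[of n w, OF nonneg] by blast

end
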